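(* Let $G$ be a complete multipartite digraph with the parity property, and let $A,B$ be two distinct maximal antichains of $G$. Then there exist subsets $R_{AB}\subseteq A$ and $S_{AB}\subseteq B$ such that for all $x\in A$ and $y\in B$: $x\to y$ if and only if ($x\in R_{AB}\iff y\in S_{AB}$).
   Context: A digraph is a set with an irreflexive binary relation $\to$ such that $x\to y$ and $y\to x$ never both hold; write $x\perp y$ if neither $x\to y$ nor $y\to x$ (with $x\perp x$). A digraph is complete multipartite if $\perp$ is an equivalence relation; its maximal antichains are the $\perp$-classes, and any two points in different classes are joined by an edge in exactly one direction. The digraph has the parity property if for every two distinct maximal antichains $A,B$, every distinct $a,a'\in A$ and every distinct $b,b'\in B$, the number of edges pointing from a vertex of $\{a,a'\}$ to a vertex of $\{b,b'\}$ is even. *)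

theory Defs
  imports Main
begin

definition digraph :: "'a set \<Rightarrow> ('a \<Rightarrow> 'a \<Rightarrow> bool) \<Rightarrow> bool" where
  "digraph V E \<longleftrightarrow> (\<forall>x y. E x y \<longrightarrow> x \<in> V \<and> y \<in> V) \<and>
     (\<forall>x\<in>V. \<not> E x x) \<and> (\<forall>x\<in>V. \<forall>y\<in>V. \<not> (E x y \<and> E y x))"

definition perp :: "('a \<Rightarrow> 'a \<Rightarrow> bool) \<Rightarrow> 'a \<Rightarrow> 'a \<Rightarrow> bool" where
  "perp E x y \<longleftrightarrow> \<not> E x y \<and> \<not> E y x"

definition antichain :: "'a set \<Rightarrow> ('a \<Rightarrow> 'a \<Rightarrow> bool) \<Rightarrow> 'a set \<Rightarrow> bool" where
  "antichain V E A \<longleftrightarrow> A \<subseteq> V \<and> (\<forall>x\<in>A. \<forall>y\<in>A. perp E x y)"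

definition maximal_antichain :: "'a set \<Rightarrow> ('a \<Rightarrow> 'a \<Rightarrow> bool) \<Rightarrow> 'a set \<Rightarrow> bool" where
  "maximal_antichain V E A \<longleftrightarrow> antichain V E A \<and>
     (\<forall>B. antichain V E B \<and> A \<subseteq> B \<longrightarrow> B = A)"

definition complete_multipartite :: "'a set \<Rightarrow> ('a \<Rightarrow> 'a \<Rightarrow> bool) \<Rightarrow> bool" where
  "complete_multipartite V E \<longleftrightarrow> digraph V E \<and>
     equiv V {(x, y). x \<in> V \<and> y \<in> V \<and> perp E x y}"

definition parity_property :: "'a set \<Rightarrow> ('a \<Rightarrow> 'a \<Rightarrow> bool) \<Rightarrow> bool" where
  "parity_property V E \<longleftrightarrow>
     (\<forall>A B a a' b b'. maximal_antichain V E A \<and> maximal_antichain V E B \<and> A \<noteq> B \<and>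
        a \<in> A \<and> a' \<in> A \<and> a \<noteq> a' \<and> b \<in> B \<and> b' \<in> B \<and> b \<noteq> b' \<longrightarrow>
        even (card {(x, y). x \<in> {a, a'} \<and> y \<in> {b, b'} \<and> E x y}))"

end

theory Submission
  imports Defs
begin

lemma four:
  assumes "a \<noteq> a'" "b \<noteq> b'"
    and "even (card {(x, y). x \<in> {a, a'} \<and> y \<in> {b, b'} \<and> E x y})"
  shows "E a' b' = (E a' b = (E a b' = E a b))"
proof -
  have eq: "{(x, y). x \<in> {a, a'} \<and> y \<in> {b, b'} \<and> E x y} =
     (if E a b then {(a,b)} else {}) \<union> (if E a b' then {(a,b')} else {}) \<union>
     (if E a' b then {(a',b)} else {}) \<union> (if E a' b' then {(a',b')} else {})"
    by auto
  show ?thesis using assms(3) unfolding eq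
    using assms(1,2) by (cases "E a b"; cases "E a b'"; cases "E a' b"; cases "E a' b'") auto
qed

theorem lemma4p1:
  fixes V :: "'a set" and E :: "'a \<Rightarrow> 'a \<Rightarrow> bool" and A B :: "'a set"
  assumes "complete_multipartite V E"
    and "parity_property V E"
    and "maximal_antichain V E A" and "maximal_antichain V E B" and "A \<noteq> B"
  shows "\<exists>R S. R \<subseteq> A \<and> S \<subseteq> B \<and>
           (\<forall>x\<in>A. \<forall>y\<in>B. E x y \<longleftrightarrow> (x \<in> R \<longleftrightarrow> y \<in> S))"
proof (cases "A = {} \<or> B = {}")
  case True
  then show ?thesis by blast
next
  case False
  then obtain a0 b0 where a0: "a0 \<in> A" and b0: "b0 \<in> B" by blast
  define R where "R = {x\<in>A. E x b0 \<longleftrightarrow> E a0 b0}"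
  define S where "S = {y\<in>B. E a0 y}"
  have key: "E x y = (E x b0 = (E a0 y = E a0 b0))" if x: "x \<in> A" and y: "y \<in> B" for x y
  proof (cases "x = a0 \<or> y = b0")
    case True then show ?thesis by auto
  next
    case F: False
    have "even (card {(u, v). u \<in> {a0, x} \<and> v \<in> {b0, y} \<and> E u v})"
    proof -
      have "\<forall>A B a a' b b'. maximal_antichain V E A \<and> maximal_antichain V E B \<and> A \<noteq> B \<and>
        a \<in> A \<and> a' \<in> A \<and> a \<noteq> a' \<and> b \<in> B \<and> b' \<in> B \<and> b \<noteq> b' \<longrightarrow>
        even (card {(x, y). x \<in> {a, a'} \<and> y \<in> {b, b'} \<and> E x y})"
        using assms(2) unfolding parity_property_def .
      then have "maximal_antichain V E A \<and> maximal_antichain V E B \<and> A \<noteq> B \<and>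
        a0 \<in> A \<and> x \<in> A \<and> a0 \<noteq> x \<and> b0 \<in> B \<and> y \<in> B \<and> b0 \<noteq> y \<longrightarrow>
        even (card {(u, v). u \<in> {a0, x} \<and> v \<in> {b0, y} \<and> E u v})"
        by blast
      then show ?thesis using assms(3,4,5) a0 b0 x y F by blast
    qed
    from four[OF _ _ this] F show ?thesis by auto
  qed
  show ?thesis
    apply (rule exI[of _ R], rule exI[of _ S])
    unfolding R_def S_def using key by (simp (no_asm_simp)) blast
qed

end
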